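(* For every $n\ge1$, the DFA $\mathcal W_n$ defined below is minimal, accepts a right ideal, and its transition semigroup has size $n^{n-1}$.
   Context: $Q_n=\{0,\dots,n-1\}$. Notation: $(p\to q)$ maps $p$ to $q$ and fixes all other states; $(p_0,\dots,p_{k-1})$ is the cyclic permutation $p_0\mapsto\cdots\mapsto p_{k-1}\mapsto p_0$ fixing other states; $\mathbf 1$ is the identity. For $n\ge3$, $\mathcal W_n$ has states $Q_n$, initial state $0$, final states $\{n-1\}$, alphabet $\{a,b,c,d\}$, with $a$ inducing $(0,1,\dots,n-2)$, $b$ inducing $(0,1)$, $c$ inducing $(n-2\to 0)$, $d$ inducing $(n-2\to n-1)$ (for $n=3$, $a$ and $b$ coincide and alphabet $\{a,c,d\}$ suffices). $\mathcal W_2$ has states $Q_2$, initial $0$, final $\{1\}$, alphabet $\{a,b\}$, $a$ inducing $(0\to1)$ and $b$ inducing $\mathbf 1$. $\mathcal W_1$ has the single state $0$, which is initial and final, alphabet $\{a\}$, $a$ inducing $\mathbf 1$. A right ideal is a nonempty $L$ with $L=L\Sigma^*$. The transition semigroup is the set of state transformations induced by nonempty words. *)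

theory Defs
  imports "HOL-Library.FuncSet"
begin

definition run :: "('a \<Rightarrow> 's \<Rightarrow> 's) \<Rightarrow> 's \<Rightarrow> 'a list \<Rightarrow> 's" where
  "run \<delta> q w = foldl (\<lambda>p a. \<delta> a p) q w"

definition is_dfa :: "'s set \<Rightarrow> 'a set \<Rightarrow> ('a \<Rightarrow> 's \<Rightarrow> 's) \<Rightarrow> 's \<Rightarrow> 's set \<Rightarrow> bool" where
  "is_dfa Q \<Sigma> \<delta> q0 F \<longleftrightarrow> finite Q \<and> finite \<Sigma> \<and> \<Sigma> \<noteq> {} \<and> q0 \<in> Q \<and> F \<subseteq> Q \<and>
     (\<forall>a\<in>\<Sigma>. \<forall>q\<in>Q. \<delta> a q \<in> Q)"

definition lang :: "'a set \<Rightarrow> ('a \<Rightarrow> 's \<Rightarrow> 's) \<Rightarrow> 's \<Rightarrow> 's set \<Rightarrow> 'a list set" where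
  "lang \<Sigma> \<delta> q0 F = {w. set w \<subseteq> \<Sigma> \<and> run \<delta> q0 w \<in> F}"

text \<open>Minimal: no DFA over the same alphabet accepting the same language has fewer states.
  (Competitor state sets are taken inside nat, which loses no generality for finite DFAs.)\<close>
definition minimal_dfa :: "'s set \<Rightarrow> 'a set \<Rightarrow> ('a \<Rightarrow> 's \<Rightarrow> 's) \<Rightarrow> 's \<Rightarrow> 's set \<Rightarrow> bool" where
  "minimal_dfa Q \<Sigma> \<delta> q0 F \<longleftrightarrow> is_dfa Q \<Sigma> \<delta> q0 F \<and>
     (\<forall>(Q'::nat set) \<delta>' q0' F'. is_dfa Q' \<Sigma> \<delta>' q0' F' \<and> lang \<Sigma> \<delta>' q0' F' = lang \<Sigma> \<delta> q0 F
        \<longrightarrow> card Q \<le> card Q')"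

definition right_ideal :: "'a set \<Rightarrow> 'a list set \<Rightarrow> bool" where
  "right_ideal \<Sigma> L \<longleftrightarrow> L \<noteq> {} \<and> L = {u @ v |u v. u \<in> L \<and> v \<in> lists \<Sigma>}"

definition trans_semigroup :: "'s set \<Rightarrow> 'a set \<Rightarrow> ('a \<Rightarrow> 's \<Rightarrow> 's) \<Rightarrow> ('s \<Rightarrow> 's) set" where
  "trans_semigroup Q \<Sigma> \<delta> = {restrict (\<lambda>q. run \<delta> q w) Q |w. w \<noteq> [] \<and> set w \<subseteq> \<Sigma>}"

text \<open>States {0..<n}; letters are encoded as naturals: a = 0, b = 1, c = 2, d = 3.\<close>

definition W_sigma :: "nat \<Rightarrow> nat set" where
  "W_sigma n = (if n \<ge> 3 then {0,1,2,3} else if n = 2 then {0,1} else {0})"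

definition W_delta :: "nat \<Rightarrow> nat \<Rightarrow> nat \<Rightarrow> nat" where
  "W_delta n x q =
    (if n \<ge> 3 then
       (if x = 0 then (if q < n - 2 then q + 1 else if q = n - 2 then 0 else q)
        else if x = 1 then (if q = 0 then 1 else if q = 1 then 0 else q)
        else if x = 2 then (if q = n - 2 then 0 else q)
        else if x = 3 then (if q = n - 2 then n - 1 else q)
        else q)
     else if n = 2 then (if x = 0 \<and> q = 0 then 1 else q)
     else q)"

end

theory Submission
  imports Defs
begin

lemma run_Nil[simp]: "run \<delta> q [] = q" by (simp add: run_def)
lemma run_Cons[simp]: "run \<delta> q (x#w) = run \<delta> (\<delta> x q) w" by (simp add: run_def)
lemma run_append[simp]: "run \<delta> q (u@v) = run \<delta> (run \<delta> q u) v" by (simp add: run_def)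

lemma run_in: "is_dfa Q \<Sigma> \<delta> q0 F \<Longrightarrow> q \<in> Q \<Longrightarrow> set w \<subseteq> \<Sigma> \<Longrightarrow> run \<delta> q w \<in> Q"
  by (induction w arbitrary: q) (auto simp: is_dfa_def)

lemma min_lb:
  assumes dfa: "is_dfa Q' \<Sigma> \<delta>' q0' F'" and L: "lang \<Sigma> \<delta>' q0' F' = lang \<Sigma> \<delta> q0 F"
  and ws: "\<forall>i<N. set (w i) \<subseteq> \<Sigma>"
  and dist: "\<forall>i<N. \<forall>j<N. i \<noteq> j \<longrightarrow> (\<exists>v. set v \<subseteq> \<Sigma> \<and> (run \<delta> q0 (w i @ v) \<in> F) \<noteq> (run \<delta> q0 (w j @ v) \<in> F))"
  shows "N \<le> card Q'"
proof -
  let ?f = "\<lambda>i. run \<delta>' q0' (w i)"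
  have inj: "inj_on ?f {0..<N}"
  proof (rule inj_onI, rule ccontr)
    fix i j assume i: "i \<in> {0..<N}" and j: "j \<in> {0..<N}" and eq: "?f i = ?f j" and ne: "i \<noteq> j"
    then obtain v where v: "set v \<subseteq> \<Sigma>" and d: "(run \<delta> q0 (w i @ v) \<in> F) \<noteq> (run \<delta> q0 (w j @ v) \<in> F)"
      using dist i j ne by (meson atLeastLessThan_iff)
    have "(w i @ v \<in> lang \<Sigma> \<delta>' q0' F') = (w j @ v \<in> lang \<Sigma> \<delta>' q0' F')"
      using eq ws i j v by (simp add: lang_def)
    then have "(w i @ v \<in> lang \<Sigma> \<delta> q0 F) = (w j @ v \<in> lang \<Sigma> \<delta> q0 F)" using L by simp
    then show False using d ws i j v by (simp add: lang_def)
  qed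
  have sub: "?f ` {0..<N} \<subseteq> Q'" using run_in[OF dfa] dfa ws by (auto simp: is_dfa_def)
  have "finite Q'" using dfa by (simp add: is_dfa_def)
  from card_inj_on_le[OF inj sub this] show ?thesis by simp
qed

lemma Wd_lt: "q < n \<Longrightarrow> W_delta n x q < n" by (auto simp: W_delta_def)
lemma run_lt: "q < n \<Longrightarrow> run (W_delta n) q w < n"
  by (induction w arbitrary: q) (auto simp: Wd_lt)
lemma Wd_sink: "W_delta n x (n-1) = n-1" unfolding W_delta_def by auto
lemma Wd_sink': "W_delta n x (n - Suc 0) = n - Suc 0" using Wd_sink by simp
lemma run_sink: "run (W_delta n) (n-1) w = n-1" by (induction w) (auto simp: Wd_sink')
lemma run_sink': "run (W_delta n) (n - Suc 0) w = n - Suc 0" using run_sink[of n w] by simp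

definition realw :: "nat \<Rightarrow> (nat \<Rightarrow> nat) \<Rightarrow> bool" where
  "realw n f \<longleftrightarrow> (\<exists>w. w \<noteq> [] \<and> set w \<subseteq> W_sigma n \<and> (\<forall>q<n. run (W_delta n) q w = f q))"

lemma realw_comp:
  assumes "realw n f" "realw n g" shows "realw n (\<lambda>q. g (f q))"
proof -
  obtain u where u: "u \<noteq> []" "set u \<subseteq> W_sigma n" "\<forall>q<n. run (W_delta n) q u = f q"
    using assms(1) unfolding realw_def by blast
  obtain v where v: "v \<noteq> []" "set v \<subseteq> W_sigma n" "\<forall>q<n. run (W_delta n) q v = g q"
    using assms(2) unfolding realw_def by blast
  have "\<forall>q<n. run (W_delta n) q (u@v) = g (f q)"
  proof (intro allI impI)
    fix q assume q: "q < n"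
    have "run (W_delta n) q u < n" using run_lt q by blast
    then show "run (W_delta n) q (u@v) = g (f q)" using u v q by simp
  qed
  then show ?thesis unfolding realw_def using u v by (intro exI[of _ "u@v"]) auto
qed

lemma realw_cong: "realw n f \<Longrightarrow> (\<And>q. q<n \<Longrightarrow> f q = g q) \<Longrightarrow> realw n g"
  unfolding realw_def by auto

lemma realw_letter: "x \<in> W_sigma n \<Longrightarrow> realw n (W_delta n x)"
  unfolding realw_def by (rule exI[of _ "[x]"]) auto

definition rot :: "nat \<Rightarrow> nat \<Rightarrow> nat \<Rightarrow> nat" where
  "rot m k q = (if q < m then (q + k) mod m else q)"
definition sw :: "nat \<Rightarrow> nat \<Rightarrow> nat \<Rightarrow> nat" where
  "sw i j q = (if q = i then j else if q = j then i else q)"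
definition mg :: "nat \<Rightarrow> nat \<Rightarrow> nat \<Rightarrow> nat" where
  "mg x y q = (if q = x then y else q)"

lemma Wd1: "3 \<le> n \<Longrightarrow> W_delta n 1 q = (if q = 0 then 1 else if q = 1 then 0 else q)"
  unfolding W_delta_def by simp
lemma Wd2: "3 \<le> n \<Longrightarrow> W_delta n 2 q = mg (n-2) 0 q"
  unfolding W_delta_def mg_def by simp
lemma Wd3: "3 \<le> n \<Longrightarrow> W_delta n 3 q = mg (n-2) (n-1) q"
  unfolding W_delta_def mg_def by simp

lemma sig3: "3 \<le> n \<Longrightarrow> W_sigma n = {0,1,2,3}" by (simp add: W_sigma_def)

lemma rot1: "3 \<le> n \<Longrightarrow> q < n \<Longrightarrow> W_delta n 0 q = rot (n-1) 1 q"
proof -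
  assume a: "3 \<le> n" "q < n"
  have e: "Suc (n-2) = n - 1" using a by simp
  show ?thesis using a unfolding W_delta_def rot_def by (auto simp: e)
qed

lemma rot_Suc: "rot m 1 (rot m k q) = rot m (Suc k) q"
  unfolding rot_def by (auto simp: mod_Suc_eq)

lemma rot_Suc2: "rot m k (rot m 1 q) = rot m (Suc k) q"
  unfolding rot_def by (auto simp: mod_add_left_eq)

lemma rot_lt: assumes "1 < n" "q < n" shows "rot (n-1) k q < n"
proof (cases "q < n-1")
  case True
  have "(q+k) mod (n-1) < n-1" by (rule mod_less_divisor) (use assms in simp)
  then have "(q+k) mod (n-1) < n" by arith
  then show ?thesis using True unfolding rot_def by simp
qed (use assms in \<open>simp add: rot_def\<close>)

lemma realw_rot_pos: "3 \<le> n \<Longrightarrow> realw n (rot (n-1) (Suc k))"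
proof (induction k)
  case 0
  then show ?case using realw_letter[of 0 n] realw_cong rot1 by (metis One_nat_def insertI1 sig3)
next
  case (Suc k)
  have "realw n (\<lambda>q. W_delta n 0 (rot (n-1) (Suc k) q))"
    using realw_comp[OF Suc.IH[OF Suc.prems] realw_letter[of 0 n]] Suc.prems by (simp add: sig3)
  then show ?case
  proof (rule realw_cong)
    fix q assume q: "q < n"
    have "rot (n-1) (Suc k) q < n" using q Suc.prems rot_lt by simp
    then show "W_delta n 0 (rot (n-1) (Suc k) q) = rot (n-1) (Suc (Suc k)) q"
      using rot1[OF Suc.prems] rot_Suc by simp
  qed
qed

lemma realw_rot: assumes "3 \<le> n" shows "realw n (rot (n-1) k)"
proof -
  have "realw n (rot (n-1) (Suc (k + (n-2))))" using realw_rot_pos assms by blast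
  then show ?thesis
  proof (rule realw_cong)
    fix q assume "q < n"
    have "Suc (k + (n-2)) = k + (n-1)" using assms by simp
    then have "rot (n-1) (Suc (k + (n-2))) q = rot (n-1) (k + (n-1)) q" by metis
    also have "\<dots> = rot (n-1) k q" unfolding rot_def
      by (metis add.assoc mod_add_self2)
    finally show "rot (n-1) (Suc (k + (n-2))) q = rot (n-1) k q" .
  qed
qed

lemma realw_id: assumes "3 \<le> n" shows "realw n (\<lambda>q. q)"
  using realw_rot[OF assms, of 0] by (rule realw_cong) (auto simp: rot_def)

lemma realw_b: assumes "3 \<le> n" shows "realw n (sw 0 1)"
proof -
  have "realw n (W_delta n 1)" using realw_letter[of 1 n] assms by (simp add: sig3)
  then show ?thesis
  proof (rule realw_cong)
    fix q show "W_delta n 1 q = sw 0 1 q" using Wd1[OF assms] by (simp add: sw_def)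
  qed
qed

lemma rot_eq: "x < m \<Longrightarrow> rot m k x = (x + k) mod m" by (simp add: rot_def)

lemma realw_adj: assumes n: "3 \<le> n" and i: "Suc i < n-1" shows "realw n (sw i (Suc i))"
proof -
  define m where "m = n - 1"
  have m2: "2 \<le> m" using n m_def by simp
  have im: "Suc i < m" using i m_def by simp
  have "realw n (\<lambda>q. rot m i (sw 0 1 (rot m (m - i) q)))"
    unfolding m_def by (rule realw_comp[OF realw_comp[OF realw_rot[OF n] realw_b[OF n]] realw_rot[OF n]])
  then show ?thesis
  proof (rule realw_cong)
    fix q assume q: "q < n"
    show "rot m i (sw 0 1 (rot m (m - i) q)) = sw i (Suc i) q"
    proof (cases "q < m")
      case False
      then have qm: "q = m" using q m_def by simp
      have a: "rot m (m - i) q = m" using qm by (simp add: rot_def)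
      have b: "sw 0 1 m = m" using m2 by (simp add: sw_def)
      have c: "rot m i m = m" by (simp add: rot_def)
      have d: "sw i (Suc i) m = m" using im by (simp add: sw_def)
      show ?thesis using a b c d qm by simp
    next
      case True
      define r where "r = (q + (m - i)) mod m"
      have rl: "r < m" using True r_def by simp
      have key: "(r + i) mod m = q"
      proof -
        have "(r + i) mod m = (q + (m - i) + i) mod m" unfolding r_def by (simp add: mod_add_left_eq)
        also have "q + (m - i) + i = q + m" using im by simp
        finally show ?thesis using True by simp
      qed
      have rr: "rot m (m - i) q = r" using True r_def rot_eq by simp
      have r0: "rot m i 0 = i" using im by (simp add: rot_eq)
      have r1: "rot m i 1 = Suc i" using im m2 by (simp add: rot_eq)
      show ?thesis
      proof (cases "r = 0")
        case True
        then have "q = i" using key im by simp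
        then show ?thesis using rr True r1 by (simp add: sw_def)
      next
        case nr0: False
        show ?thesis
        proof (cases "r = 1")
          case True
          then have "q = Suc i" using key im by simp
          then show ?thesis using rr True r0 by (simp add: sw_def)
        next
          case nr1: False
          have "q \<noteq> i"
          proof
            assume "q = i"
            then have "r = 0" unfolding r_def using im by simp
            then show False using nr0 by simp
          qed
          moreover have "q \<noteq> Suc i"
          proof
            assume "q = Suc i"
            then have "r = 1" unfolding r_def using im m2 by (simp add: mod_Suc)
            then show False using nr1 by simp
          qed
          moreover have "rot m i r = q" using rl key by (simp add: rot_eq)
          ultimately show ?thesis using rr nr0 nr1 by (simp add: sw_def)
        qed
      qed
    qed
  qed
qed

lemma realw_comp3: "realw n f \<Longrightarrow> realw n g \<Longrightarrow> realw n h \<Longrightarrow> realw n (\<lambda>q. h (g (f q)))"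
  using realw_comp[OF realw_comp] by blast

lemma realw_sw_lt: assumes n: "3 \<le> n" shows "i < j \<Longrightarrow> j < n-1 \<Longrightarrow> realw n (sw i j)"
proof (induction j)
  case 0 then show ?case by simp
next
  case (Suc j)
  show ?case
  proof (cases "i = j")
    case True then show ?thesis using realw_adj[OF n] Suc.prems by simp
  next
    case False
    then have ij: "i < j" using Suc.prems by simp
    have "realw n (\<lambda>q. sw j (Suc j) (sw i j (sw j (Suc j) q)))"
      by (rule realw_comp3[OF realw_adj[OF n] Suc.IH realw_adj[OF n]]) (use Suc.prems ij in auto)
    then show ?thesis by (rule realw_cong) (use ij in \<open>auto simp: sw_def\<close>)
  qed
qed

lemma realw_sw: assumes n: "3 \<le> n" and i: "i < n-1" and j: "j < n-1" shows "realw n (sw i j)"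
proof -
  consider "i < j" | "i = j" | "j < i" by arith
  then show ?thesis
  proof cases
    case 1 then show ?thesis using realw_sw_lt[OF n] j by blast
  next
    case 2
    from realw_id[OF n] show ?thesis by (rule realw_cong) (use 2 in \<open>auto simp: sw_def\<close>)
  next
    case 3
    have "realw n (sw j i)" using realw_sw_lt[OF n] 3 i by blast
    then show ?thesis by (rule realw_cong) (auto simp: sw_def)
  qed
qed

lemma conj_mg: "sw p r (mg x y (sw p r q)) = mg (sw p r x) (sw p r y) q"
  unfolding sw_def mg_def by auto

lemma realw_conj: "realw n (sw p r) \<Longrightarrow> realw n (mg x y) \<Longrightarrow> realw n (mg (sw p r x) (sw p r y))"
  using realw_comp3[of n "sw p r" "mg x y" "sw p r"] realw_cong conj_mg by metis

lemma realw_c: assumes n: "3 \<le> n" shows "realw n (mg (n-2) 0)"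
proof -
  have "realw n (W_delta n 2)" using realw_letter[of 2 n] n by (simp add: sig3)
  then show ?thesis by (rule realw_cong) (rule Wd2[OF n])
qed

lemma realw_d: assumes n: "3 \<le> n" shows "realw n (mg (n-2) (n-1))"
proof -
  have "realw n (W_delta n 3)" using realw_letter[of 3 n] n by (simp add: sig3)
  then show ?thesis by (rule realw_cong) (rule Wd3[OF n])
qed

lemma realw_mg_sink: assumes n: "3 \<le> n" and i: "i < n-1" shows "realw n (mg i (n-1))"
proof -
  have "realw n (mg (sw i (n-2) (n-2)) (sw i (n-2) (n-1)))"
    using realw_conj[OF realw_sw[OF n i, of "n-2"] realw_d[OF n]] n by simp
  moreover have "sw i (n-2) (n-2) = i" "sw i (n-2) (n-1) = n-1" using n i by (auto simp: sw_def)
  ultimately show ?thesis by simp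
qed

lemma realw_mg_top: assumes n: "3 \<le> n" and j: "j < n-1" "j \<noteq> n-2" shows "realw n (mg (n-2) j)"
proof -
  have "realw n (mg (sw 0 j (n-2)) (sw 0 j 0))"
    using realw_conj[OF realw_sw[OF n _ j(1), of 0] realw_c[OF n]] n by simp
  moreover have "sw 0 j (n-2) = n-2" "sw 0 j 0 = j" using n j by (auto simp: sw_def)
  ultimately show ?thesis by simp
qed

lemma realw_mg: assumes n: "3 \<le> n" and i: "i < n-1" and j: "j < n-1" and ij: "i \<noteq> j"
  shows "realw n (mg i j)"
proof -
  define j' where "j' = sw i (n-2) j"
  have j'1: "j' < n-1" using i j n unfolding j'_def sw_def by auto
  have j'2: "j' \<noteq> n-2" using i j ij n unfolding j'_def sw_def by auto
  have "realw n (mg (sw i (n-2) (n-2)) (sw i (n-2) j'))"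
    using realw_conj[OF realw_sw[OF n i, of "n-2"] realw_mg_top[OF n j'1 j'2]] n by simp
  moreover have "sw i (n-2) (n-2) = i" "sw i (n-2) j' = j" unfolding j'_def sw_def by auto
  ultimately show ?thesis by simp
qed

lemma sw_range: "sw i j x \<in> {i, j, x}" by (simp add: sw_def)
lemma sw_inv: "sw i j (sw i j x) = x" by (simp add: sw_def)

lemma realw_gen:
  assumes n: "3 \<le> n"
  shows "(\<forall>q<n-1. g q < n) \<Longrightarrow> g (n-1) = n-1 \<Longrightarrow> realw n g"
proof (induction "card {q. q < n-1 \<and> g q \<noteq> q}" arbitrary: g rule: less_induct)
  case less
  let ?m = "n - 1"
  let ?S = "\<lambda>g. {q. q < ?m \<and> g q \<noteq> q}"
  have finS: "finite (?S h)" for h by simp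
  show ?case
  proof (cases "?S g = {}")
    case True
    have "g q = q" if q: "q < n" for q
    proof (cases "q < ?m")
      case True then show ?thesis using \<open>?S g = {}\<close> by blast
    next
      case False then have "q = ?m" using q by simp
      then show ?thesis using less.prems(2) by simp
    qed
    with realw_id[OF n] show ?thesis by (rule_tac realw_cong) auto
  next
    case False
    then obtain i where i: "i < ?m" "g i \<noteq> i" by blast
    show ?thesis
    proof (cases "\<exists>y<?m. \<forall>q<?m. g q \<noteq> y")
      case True
      then obtain y where y: "y < ?m" "\<forall>q<?m. g q \<noteq> y" by blast
      define h where "h = g(y := y)"
      have sub: "?S h \<subset> ?S g"
      proof
        show "?S h \<subseteq> ?S g" unfolding h_def by auto
        have "y \<in> ?S g" using y by auto
        moreover have "y \<notin> ?S h" unfolding h_def by auto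
        ultimately show "?S h \<noteq> ?S g" by blast
      qed
      have "card (?S h) < card (?S g)" by (rule psubset_card_mono[OF finS sub])
      moreover have "\<forall>q<?m. h q < n" using less.prems(1) y n unfolding h_def by auto
      moreover have "h ?m = ?m" using less.prems(2) y unfolding h_def by auto
      ultimately have rh: "realw n h" using less.hyps by blast
      have gy: "g y < n" using less.prems(1) y by auto
      have rm: "realw n (mg y (g y))"
      proof (cases "g y = ?m")
        case True then show ?thesis using realw_mg_sink[OF n y(1)] by simp
      next
        case False
        then have "g y < ?m" using gy by simp
        moreover have "y \<noteq> g y" using y by auto
        ultimately show ?thesis using realw_mg[OF n y(1)] by blast
      qed
      have "realw n (\<lambda>q. mg y (g y) (h q))" by (rule realw_comp[OF rh rm])
      then show ?thesis
      proof (rule realw_cong)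
        fix q assume q: "q < n"
        show "mg y (g y) (h q) = g q"
        proof (cases "q = y")
          case True then show ?thesis unfolding h_def mg_def by simp
        next
          case False
          have "g q \<noteq> y"
          proof (cases "q < ?m")
            case True then show ?thesis using y by blast
          next
            case False then have "q = ?m" using q by simp
            then show ?thesis using y less.prems(2) by simp
          qed
          then show ?thesis using False unfolding h_def mg_def by simp
        qed
      qed
    next
      case False
      then have surj: "\<forall>y<?m. \<exists>q<?m. g q = y" by blast
      have img: "{0..<?m} \<subseteq> g ` {0..<?m}" using surj by fastforce
      have mnot: "?m \<notin> g ` {0..<?m}"
      proof
        assume "?m \<in> g ` {0..<?m}"
        then have "insert ?m {0..<?m} \<subseteq> g ` {0..<?m}" using img by blast
        then have "card (insert ?m {0..<?m}) \<le> card (g ` {0..<?m})" by (intro card_mono) auto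
        also have "\<dots> \<le> card {0..<?m}" by (rule card_image_le) simp
        finally show False by simp
      qed
      have gl: "\<forall>q<?m. g q < ?m"
      proof (intro allI impI)
        fix q assume q: "q < ?m"
        then have "g q \<in> g ` {0..<?m}" by simp
        then have "g q \<noteq> ?m" using mnot by metis
        moreover have "g q < n" using less.prems(1) q by simp
        ultimately show "g q < ?m" by simp
      qed
      have "g ` {0..<?m} = {0..<?m}" using img gl by auto
      then have inj: "inj_on g {0..<?m}" by (simp add: eq_card_imp_inj_on)
      define t where "t = g i"
      have t: "t < ?m" using gl i unfolding t_def by simp
      define h where "h = (\<lambda>q. sw i t (g q))"
      have sub: "?S h \<subset> ?S g"
      proof
        show "?S h \<subseteq> ?S g"
        proof
          fix q assume "q \<in> ?S h"
          then have q: "q < ?m" "h q \<noteq> q" by auto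
          show "q \<in> ?S g"
          proof (rule ccontr)
            assume "q \<notin> ?S g"
            then have gq: "g q = q" using q by auto
            have "q \<noteq> i" using gq i by auto
            moreover have "q \<noteq> t"
            proof
              assume "q = t"
              then have "g q = g i" using gq t_def by simp
              then have "q = i" using inj q i by (auto dest: inj_onD)
              then show False using \<open>q \<noteq> i\<close> by simp
            qed
            ultimately have "h q = q" unfolding h_def sw_def using gq by simp
            then show False using q by simp
          qed
        qed
        have "i \<in> ?S g" using i by auto
        moreover have "h i = i" unfolding h_def sw_def t_def by simp
        then have "i \<notin> ?S h" by simp
        ultimately show "?S h \<noteq> ?S g" by blast
      qed
      have "card (?S h) < card (?S g)" by (rule psubset_card_mono[OF finS sub])
      moreover have "\<forall>q<?m. h q < n"
      proof (intro allI impI)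
        fix q assume q: "q < ?m"
        have "g q < ?m" using gl q by blast
        then have "sw i t (g q) < ?m" using sw_range[of i t "g q"] i t by auto
        then show "h q < n" unfolding h_def by simp
      qed
      moreover have "h ?m = ?m"
      proof -
        have "?m \<noteq> i" "?m \<noteq> t" using i t by auto
        then show ?thesis using less.prems(2) unfolding h_def sw_def by simp
      qed
      ultimately have rh: "realw n h" using less.hyps by blast
      have "realw n (\<lambda>q. sw i t (h q))" by (rule realw_comp[OF rh realw_sw[OF n i(1) t]])
      then show ?thesis by (rule realw_cong) (simp add: h_def sw_inv)
    qed
  qed
qed

lemma realw_all:
  assumes n: "1 \<le> n" and g: "\<forall>q<n. g q < n" and gm: "g (n-1) = n-1"
  shows "realw n g"
proof -
  consider "n = 1" | "n = 2" | "3 \<le> n" using n by arith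
  then show ?thesis
  proof cases
    case 1
    then show ?thesis unfolding realw_def using gm
      by (intro exI[of _ "[0]"]) (auto simp: W_sigma_def W_delta_def)
  next
    case 2
    have "g 0 < 2" using g 2 by simp
    then have "g 0 = 0 \<or> g 0 = 1" by arith
    then show ?thesis
    proof
      assume "g 0 = 0"
      then show ?thesis unfolding realw_def using gm 2
        by (intro exI[of _ "[1]"]) (auto simp: W_sigma_def W_delta_def less_2_cases_iff)
    next
      assume "g 0 = 1"
      then show ?thesis unfolding realw_def using gm 2
        by (intro exI[of _ "[0]"]) (auto simp: W_sigma_def W_delta_def less_2_cases_iff)
    qed
  next
    case 3
    then show ?thesis using realw_gen g gm by simp
  qed
qed

lemma ts_eq:
  assumes n: "1 \<le> n"
  shows "trans_semigroup {0..<n} (W_sigma n) (W_delta n)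
       = PiE {0..<n} (\<lambda>q. if q = n-1 then {n-1} else {0..<n})" (is "?T = ?P")
proof
  show "?T \<subseteq> ?P"
  proof
    fix x assume "x \<in> ?T"
    then obtain w where x: "x = restrict (\<lambda>q. run (W_delta n) q w) {0..<n}"
      unfolding trans_semigroup_def by blast
    show "x \<in> ?P" unfolding x
      by (auto simp: run_lt run_sink run_sink' PiE_iff)
  qed
next
  show "?P \<subseteq> ?T"
  proof
    fix f assume f: "f \<in> ?P"
    have fl: "\<forall>q<n. f q < n"
    proof (intro allI impI)
      fix q assume "q < n"
      then have "f q \<in> (if q = n-1 then {n-1} else {0..<n})" using f by (auto simp: PiE_iff)
      then show "f q < n" using n by (auto split: if_splits)
    qed
    have "f (n-1) \<in> (if n-1 = n-1 then {n-1} else {0..<n})" 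
    proof -
      have "n - 1 \<in> {0..<n}" using n by simp
      then show ?thesis using f by (rule_tac PiE_mem) auto
    qed
    then have fm: "f (n-1) = n-1" by simp
    obtain w where w: "w \<noteq> []" "set w \<subseteq> W_sigma n" "\<forall>q<n. run (W_delta n) q w = f q"
      using realw_all[OF n fl fm] unfolding realw_def by blast
    have "f = restrict (\<lambda>q. run (W_delta n) q w) {0..<n}"
    proof
      fix q show "f q = restrict (\<lambda>q. run (W_delta n) q w) {0..<n} q"
      proof (cases "q < n")
        case True then show ?thesis using w by simp
      next
        case False then show ?thesis using f by (auto simp: PiE_iff extensional_def)
      qed
    qed
    then show "f \<in> ?T" unfolding trans_semigroup_def using w by blast
  qed
qed

lemma card_ts:
  assumes n: "1 \<le> n"
  shows "card (trans_semigroup {0..<n} (W_sigma n) (W_delta n)) = n ^ (n-1)"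
proof -
  let ?B = "\<lambda>q. card (if q = n-1 then {n-1} else {0..<n})"
  have e: "{0..<n} = insert (n-1) {0..<n-1}" using n by auto
  have "(\<Prod>q\<in>{0..<n}. ?B q) = ?B (n-1) * (\<Prod>q\<in>{0..<n-1}. ?B q)"
    unfolding e by (subst prod.insert) auto
  also have "(\<Prod>q\<in>{0..<n-1}. ?B q) = (\<Prod>q\<in>{0..<n-1}. n)"
    by (rule prod.cong) auto
  finally have p: "(\<Prod>q\<in>{0..<n}. ?B q) = n ^ (n-1)" by simp
  show ?thesis unfolding ts_eq[OF n] using p by (simp add: card_PiE)
qed

lemma run_rep: assumes n: "3 \<le> n"
  shows "q < n \<Longrightarrow> run (W_delta n) q (replicate k 0) = rot (n-1) k q"
proof (induction k arbitrary: q)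
  case 0 then show ?case by (simp add: rot_def)
next
  case (Suc k)
  have "run (W_delta n) q (replicate (Suc k) 0) = run (W_delta n) (W_delta n 0 q) (replicate k 0)" by simp
  also have "\<dots> = rot (n-1) k (W_delta n 0 q)" using Suc.IH Wd_lt Suc.prems by blast
  also have "\<dots> = rot (n-1) (Suc k) q" using rot1[OF n Suc.prems] rot_Suc2 by simp
  finally show ?case .
qed

definition wd :: "nat \<Rightarrow> nat \<Rightarrow> nat list" where
  "wd n i = (if i < n-1 then replicate i 0 else if 3 \<le> n then replicate (n-2) 0 @ [3] else replicate (n-1) 0)"

lemma wd_set: "1 \<le> n \<Longrightarrow> set (wd n i) \<subseteq> W_sigma n"
  unfolding wd_def W_sigma_def by auto

lemma run_wd: assumes n: "1 \<le> n" and i: "i < n" shows "run (W_delta n) 0 (wd n i) = i"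
proof -
  consider "n = 1" | "n = 2" | "3 \<le> n" using n by arith
  then show ?thesis
  proof cases
    case 1 then show ?thesis using i by (simp add: wd_def)
  next
    case 2
    then have "i = 0 \<or> i = 1" using i by arith
    then show ?thesis
    proof
      assume "i = 0" then show ?thesis using 2 by (simp add: wd_def)
    next
      assume "i = 1" then show ?thesis using 2 by (simp add: wd_def W_delta_def)
    qed
  next
    case 3
    show ?thesis
    proof (cases "i < n-1")
      case True
      then show ?thesis using run_rep[OF 3, of 0 i] 3 by (simp add: wd_def rot_def)
    next
      case False
      then have ii: "i = n-1" using i by simp
      have "rot (n-1) (n-2) 0 = n-2" using 3 by (simp add: rot_def)
      then have "run (W_delta n) 0 (replicate (n-2) 0) = n-2" using run_rep[OF 3, of 0 "n-2"] 3 by simp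
      then show ?thesis using ii 3 False by (simp add: wd_def Wd3 mg_def)
    qed
  qed
qed

lemma mod_ne: assumes "i < (m::nat)" "j < m" "i \<noteq> j" shows "(j + (m - 1 - i)) mod m \<noteq> m - 1"
proof (cases "j < i")
  case True
  then have "j + (m - 1 - i) < m - 1" using assms by presburger
  then show ?thesis by simp
next
  case False
  then have "j + (m - 1 - i) = (j - i - 1) + m" using assms by presburger
  then have "(j + (m - 1 - i)) mod m = (j - i - 1) mod m" by (simp only: mod_add_self2)
  also have "j - i - 1 < m" using assms by presburger
  then have "(j - i - 1) mod m = j - i - 1" by (rule mod_less)
  finally have e: "(j + (m - 1 - i)) mod m = j - i - 1" .
  have "j - i - 1 \<noteq> m - 1" using assms by presburger
  then show ?thesis using e by simp
qed

lemma dist_states: assumes n: "1 \<le> n" and i: "i < n" and j: "j < n" and ij: "i \<noteq> j"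
  shows "\<exists>v. set v \<subseteq> W_sigma n \<and> (run (W_delta n) i v = n-1) \<noteq> (run (W_delta n) j v = n-1)"
proof (cases "i = n-1 \<or> j = n-1")
  case True
  then show ?thesis using ij by (intro exI[of _ "[]"]) auto
next
  case False
  then have i': "i < n-1" and j': "j < n-1" using i j by auto
  then have n3: "3 \<le> n" using ij by arith
  define v where "v = replicate (n-2-i) 0 @ [3::nat]"
  have vs: "set v \<subseteq> W_sigma n" using n3 by (auto simp: v_def sig3)
  have "rot (n-1) (n-2-i) i = n-2" using i' n3 by (simp add: rot_def)
  then have ri: "run (W_delta n) i v = n-1" using run_rep[OF n3, of i "n-2-i"] i n3
    by (simp add: v_def Wd3 mg_def)
  define r where "r = (j + (n-2-i)) mod (n-1)"
  have rne: "r \<noteq> n-2" using mod_ne[OF i' j' ij] unfolding r_def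
    by (metis diff_diff_left one_add_one)
  have rl: "r < n-1" unfolding r_def using n3 by simp
  have "rot (n-1) (n-2-i) j = r" using j' unfolding rot_def r_def by simp
  then have "run (W_delta n) j v = r" using run_rep[OF n3, of j "n-2-i"] j n3 rne
    by (simp add: v_def Wd3 mg_def)
  then have "run (W_delta n) j v \<noteq> n-1" using rl by simp
  then show ?thesis using vs ri by blast
qed

lemma is_dfa_W: "1 \<le> n \<Longrightarrow> is_dfa {0..<n} (W_sigma n) (W_delta n) 0 {n-1}"
  unfolding is_dfa_def by (auto simp: Wd_lt W_sigma_def)

theorem lemma1:
  fixes n :: nat
  assumes "n \<ge> 1"
  shows "minimal_dfa {0..<n} (W_sigma n) (W_delta n) 0 {n - 1}
       \<and> right_ideal (W_sigma n) (lang (W_sigma n) (W_delta n) 0 {n - 1})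
       \<and> card (trans_semigroup {0..<n} (W_sigma n) (W_delta n)) = n ^ (n - 1)"
proof (intro conjI)
  show "card (trans_semigroup {0..<n} (W_sigma n) (W_delta n)) = n ^ (n - 1)"
    using card_ts assms by simp
  show "minimal_dfa {0..<n} (W_sigma n) (W_delta n) 0 {n - 1}"
    unfolding minimal_dfa_def
  proof (intro conjI allI impI)
    show "is_dfa {0..<n} (W_sigma n) (W_delta n) 0 {n - 1}" using is_dfa_W assms by simp
    fix Q' :: "nat set" and \<delta>' q0' F'
    assume a: "is_dfa Q' (W_sigma n) \<delta>' q0' F' \<and> lang (W_sigma n) \<delta>' q0' F' = lang (W_sigma n) (W_delta n) 0 {n - 1}"
    have "n \<le> card Q'"
    proof (rule min_lb[where w = "wd n"])
      show "is_dfa Q' (W_sigma n) \<delta>' q0' F'" using a by blast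
      show "lang (W_sigma n) \<delta>' q0' F' = lang (W_sigma n) (W_delta n) 0 {n - 1}" using a by blast
      show "\<forall>i<n. set (wd n i) \<subseteq> W_sigma n" using wd_set assms by blast
      show "\<forall>i<n. \<forall>j<n. i \<noteq> j \<longrightarrow> (\<exists>v. set v \<subseteq> W_sigma n \<and>
          (run (W_delta n) 0 (wd n i @ v) \<in> {n-1}) \<noteq> (run (W_delta n) 0 (wd n j @ v) \<in> {n-1}))"
        using dist_states[OF assms] run_wd[OF assms] by simp
    qed
    then show "card {0..<n} \<le> card Q'" by simp
  qed
  show "right_ideal (W_sigma n) (lang (W_sigma n) (W_delta n) 0 {n - 1})"
    unfolding right_ideal_def
  proof (intro conjI)
    have "wd n (n-1) \<in> lang (W_sigma n) (W_delta n) 0 {n - 1}"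
      using wd_set[OF assms] run_wd[OF assms, of "n-1"] assms unfolding lang_def by simp
    then show "lang (W_sigma n) (W_delta n) 0 {n - 1} \<noteq> {}" by blast
    show "lang (W_sigma n) (W_delta n) 0 {n - 1} =
      {u @ v |u v. u \<in> lang (W_sigma n) (W_delta n) 0 {n - 1} \<and> v \<in> lists (W_sigma n)}"
    proof
      show "lang (W_sigma n) (W_delta n) 0 {n - 1} \<subseteq>
        {u @ v |u v. u \<in> lang (W_sigma n) (W_delta n) 0 {n - 1} \<and> v \<in> lists (W_sigma n)}"
      proof
        fix w assume "w \<in> lang (W_sigma n) (W_delta n) 0 {n - 1}"
        then show "w \<in> {u @ v |u v. u \<in> lang (W_sigma n) (W_delta n) 0 {n - 1} \<and> v \<in> lists (W_sigma n)}"
          by (intro CollectI exI[of _ w] exI[of _ "[]"]) simp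
      qed
      show "{u @ v |u v. u \<in> lang (W_sigma n) (W_delta n) 0 {n - 1} \<and> v \<in> lists (W_sigma n)}
        \<subseteq> lang (W_sigma n) (W_delta n) 0 {n - 1}"
      proof
        fix x assume "x \<in> {u @ v |u v. u \<in> lang (W_sigma n) (W_delta n) 0 {n - 1} \<and> v \<in> lists (W_sigma n)}"
        then obtain u v where x: "x = u @ v" and u: "u \<in> lang (W_sigma n) (W_delta n) 0 {n - 1}"
          and v: "v \<in> lists (W_sigma n)" by blast
        have "run (W_delta n) 0 u = n - 1" "set u \<subseteq> W_sigma n" using u unfolding lang_def by auto
        then have "run (W_delta n) 0 (u @ v) = n - 1" using run_sink[of n v] by simp
        moreover have "set (u @ v) \<subseteq> W_sigma n" using \<open>set u \<subseteq> W_sigma n\<close> v by auto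
        ultimately show "x \<in> lang (W_sigma n) (W_delta n) 0 {n - 1}" unfolding lang_def x by simp
      qed
    qed
  qed
qed

end
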